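(* Let $r\ge1$, $n$ be integers and let $\sigma,\sigma':\mathbb{Z}_n\to\{0,1\}$ satisfy $\mathrm{maj}_r(\sigma)=\sigma'$. Then $b(\sigma')\le b(\sigma)$.
   Context: Cells are elements of $\mathbb{Z}_n$, arithmetic mod $n$; $[a,b]$ denotes the cyclic interval $a,\dots,b$. The majority rule with radius $r$: $\mathrm{maj}_r(\sigma)(i)=0$ if among the cells of $[i-r,i+r]$ strictly more have value $0$ than $1$ under $\sigma$, and $=1$ otherwise. For $\beta\in\{0,1\}$, $B^\beta(\sigma)$ is the set of cell intervals $[i,j]$ with $\sigma(k)=\beta$ for all $k\in[i,j]$ and $\sigma(i-1)=\sigma(j+1)=1-\beta$; $B(\sigma)=B^0(\sigma)\cup B^1(\sigma)$ and $b(\sigma)=|B(\sigma)|$. *)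

theory Defs
  imports Main
begin

text \<open>Cells are the integers 0..n-1 representing Z_n; a configuration is a
function sigma :: int => nat whose values on cells lie in {0,1}.\<close>

definition cell :: "int \<Rightarrow> (int \<Rightarrow> nat) \<Rightarrow> int \<Rightarrow> nat" where
  "cell n \<sigma> x = \<sigma> (x mod n)"

definition is_config :: "int \<Rightarrow> (int \<Rightarrow> nat) \<Rightarrow> bool" where
  "is_config n \<sigma> \<longleftrightarrow> (\<forall>i. 0 \<le> i \<and> i < n \<longrightarrow> \<sigma> i \<in> {0, 1})"

definition maj :: "int \<Rightarrow> int \<Rightarrow> (int \<Rightarrow> nat) \<Rightarrow> int \<Rightarrow> nat" where
  "maj r n \<sigma> i =
     (if card {k \<in> {-r..r}. cell n \<sigma> (i + k) = 0} > card {k \<in> {-r..r}. cell n \<sigma> (i + k) = 1}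
      then 0 else 1)"

text \<open>Cyclic interval [i,j] = i, i+1, ..., j (mod n); block of value beta.\<close>
definition blocks :: "nat \<Rightarrow> int \<Rightarrow> (int \<Rightarrow> nat) \<Rightarrow> (int \<times> int) set" where
  "blocks \<beta> n \<sigma> = {(i, j). 0 \<le> i \<and> i < n \<and> 0 \<le> j \<and> j < n \<and>
      (\<forall>k. 0 \<le> k \<and> k \<le> (j - i) mod n \<longrightarrow> cell n \<sigma> (i + k) = \<beta>) \<and>
      cell n \<sigma> (i - 1) = 1 - \<beta> \<and> cell n \<sigma> (j + 1) = 1 - \<beta>}"

definition num_blocks :: "int \<Rightarrow> (int \<Rightarrow> nat) \<Rightarrow> nat" where
  "num_blocks n \<sigma> = card (blocks 0 n \<sigma> \<union> blocks 1 n \<sigma>)"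

end

theory Submission
  imports Defs
begin


lemma cell_mod: "cell n s (x mod n) = cell n s x"
  by (simp add: cell_def)

lemma cell_cong: "x mod n = y mod n \<Longrightarrow> cell n s x = cell n s y"
  by (simp add: cell_def)

lemma cell_per: "cell n s (x + n) = cell n s x"
  by (simp add: cell_def)

lemma cell_01: "is_config n s \<Longrightarrow> n \<ge> 1 \<Longrightarrow> cell n s x \<in> {0,1}"
  unfolding cell_def is_config_def by auto

lemma blocks_fst:
  assumes "(i,j) \<in> blocks b n s" "b \<in> {0,1}" "n \<ge> 1"
  shows "0 \<le> i \<and> i < n \<and> cell n s i = b \<and> cell n s (i - 1) \<noteq> cell n s i"
proof -
  have "cell n s (i + 0) = b" using assms(1) unfolding blocks_def
    by (auto simp: assms(3))
  then show ?thesis using assms unfolding blocks_def by auto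
qed

lemma blocks_inj:
  assumes "(i,j) \<in> blocks b n s" "(i,j') \<in> blocks b n s" "b \<in> {0,1}" "n \<ge> 1"
  shows "j = j'"
proof -
  define m where "m = (j - i) mod n"
  define m' where "m' = (j' - i) mod n"
  have m: "0 \<le> m" "m < n" "0 \<le> m'" "m' < n" using assms(4) by (auto simp: m_def m'_def)
  have A: "\<forall>k. 0 \<le> k \<and> k \<le> m \<longrightarrow> cell n s (i + k) = b" "cell n s (j + 1) = 1 - b"
    and ij: "0 \<le> j" "j < n"
    using assms(1) unfolding blocks_def m_def by auto
  have B: "\<forall>k. 0 \<le> k \<and> k \<le> m' \<longrightarrow> cell n s (i + k) = b" "cell n s (j' + 1) = 1 - b"
    and ij': "0 \<le> j'" "j' < n"
    using assms(2) unfolding blocks_def m'_def by auto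
  have gen: "\<And>jj. (i + (jj - i) mod n + 1) mod n = (jj + 1) mod n"
  proof -
    fix jj
    have "(i + (jj - i) mod n + 1) mod n = ((jj - i) mod n + (i + 1)) mod n" by (simp add: algebra_simps)
    also have "\<dots> = ((jj - i) + (i + 1)) mod n" by (rule mod_add_left_eq)
    finally show "(i + (jj - i) mod n + 1) mod n = (jj + 1) mod n" by simp
  qed
  have c1: "cell n s (j + 1) = cell n s (i + m + 1)"
    by (rule cell_cong) (simp add: m_def gen)
  have c2: "cell n s (j' + 1) = cell n s (i + m' + 1)"
    by (rule cell_cong) (simp add: m'_def gen)
  have "\<not> m < m'"
  proof
    assume "m < m'"
    then have "cell n s (i + (m + 1)) = b" using B(1) m by auto
    then show False using A(2) c1 assms(3) by (auto simp: add.assoc)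
  qed
  moreover have "\<not> m' < m"
  proof
    assume "m' < m"
    then have "cell n s (i + (m' + 1)) = b" using A(1) m by auto
    then show False using B(2) c2 assms(3) by (auto simp: add.assoc)
  qed
  ultimately have "m = m'" by simp
  then have "j mod n = j' mod n" unfolding m_def m'_def
    by (metis add.commute diff_add_cancel mod_add_right_eq)
  then show ?thesis using ij ij' by simp
qed

lemma blocks_ex:
  assumes "0 \<le> i" "i < n" "cell n s (i - 1) \<noteq> cell n s i" "is_config n s" "n \<ge> 1"
  shows "\<exists>j. (i, j) \<in> blocks (cell n s i) n s"
proof -
  define b where "b = cell n s i"
  have b01: "b \<in> {0,1}" unfolding b_def by (rule cell_01[OF assms(4,5)])
  have cm: "cell n s (i - 1) = 1 - b" using cell_01[OF assms(4,5), of "i-1"] assms(3) b01 b_def by auto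
  have n2: "n \<ge> 2"
  proof (rule ccontr)
    assume "\<not> n \<ge> 2" then have "n = 1" using assms by simp
    then show False using assms(3) by (simp add: cell_def)
  qed
  have ex: "\<exists>m::nat. cell n s (i + int m + 1) \<noteq> b"
  proof
    have "cell n s (i + int (nat (n - 2)) + 1) = cell n s (i - 1 + n)" using n2 by (simp add: algebra_simps)
    also have "\<dots> = 1 - b" using cm cell_per[of n s "i - 1"] by simp
    finally show "cell n s (i + int (nat (n - 2)) + 1) \<noteq> b" using b01 by auto
  qed
  define m0 where "m0 = (LEAST m::nat. cell n s (i + int m + 1) \<noteq> b)"
  have m0: "cell n s (i + int m0 + 1) \<noteq> b" unfolding m0_def by (rule LeastI_ex[OF ex])
  have lt: "cell n s (i + int k + 1) = b" if "k < m0" for k :: nat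
  proof -
    have "\<not> cell n s (i + int k + 1) \<noteq> b" using that unfolding m0_def by (rule not_less_Least)
    then show ?thesis by simp
  qed
  have m0le: "int m0 \<le> n - 2"
  proof -
    have "cell n s (i + int (nat (n - 2)) + 1) = cell n s (i - 1 + n)" using n2 by (simp add: algebra_simps)
    also have "\<dots> = 1 - b" using cm cell_per[of n s "i - 1"] by simp
    finally have "cell n s (i + int (nat (n - 2)) + 1) \<noteq> b" using b01 by auto
    then have "m0 \<le> nat (n - 2)" unfolding m0_def by (rule Least_le)
    then show ?thesis using n2 by linarith
  qed
  define j where "j = (i + int m0) mod n"
  have jm: "(j - i) mod n = int m0"
  proof -
    have "(j - i) mod n = (i + int m0 - i) mod n" unfolding j_def by (rule mod_diff_left_eq)
    also have "\<dots> = int m0 mod n" by simp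
    also have "\<dots> = int m0" using m0le n2 by (intro mod_pos_pos_trivial) auto
    finally show ?thesis .
  qed
  have all: "\<forall>k. 0 \<le> k \<and> k \<le> (j - i) mod n \<longrightarrow> cell n s (i + k) = b"
  proof (intro allI impI)
    fix k assume k: "0 \<le> k \<and> k \<le> (j - i) mod n"
    show "cell n s (i + k) = b"
    proof (cases "k = 0")
      case True then show ?thesis by (simp add: b_def)
    next
      case False
      then have "nat (k - 1) < m0" using k jm by linarith
      then have "cell n s (i + int (nat (k - 1)) + 1) = b" by (rule lt)
      moreover have "i + int (nat (k - 1)) + 1 = i + k" using k False by simp
      ultimately show ?thesis by simp
    qed
  qed
  have cj: "cell n s (j + 1) = 1 - b"
  proof -
    have "cell n s (j + 1) = cell n s (i + int m0 + 1)"
      by (rule cell_cong) (simp add: j_def mod_simps)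
    then show ?thesis using m0 cell_01[OF assms(4,5), of "i + int m0 + 1"] b01 by auto
  qed
  have j01: "0 \<le> j" "j < n" using assms(5) j_def by auto
  have "(i, j) \<in> blocks b n s" unfolding blocks_def using assms(1,2) all cm cj j01
    by blast
  then show ?thesis using b_def by auto
qed

lemma num_blocks_eq:
  assumes "is_config n s" "n \<ge> 1"
  shows "num_blocks n s = card {i \<in> {0..<n}. cell n s (i - 1) \<noteq> cell n s i}"
proof -
  let ?U = "blocks 0 n s \<union> blocks 1 n s"
  let ?D = "{i \<in> {0..<n}. cell n s (i - 1) \<noteq> cell n s i}"
  have inj: "inj_on fst ?U"
  proof (rule inj_onI)
    fix p q assume p: "p \<in> ?U" and q: "q \<in> ?U" and e: "fst p = fst q"
    obtain i j where pij: "p = (i, j)" by (cases p)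
    obtain j' where qij: "q = (i, j')" using e pij by (cases q) auto
    obtain b where pb: "(i,j) \<in> blocks b n s" "b \<in> {0,1}" using p pij by auto
    obtain b' where qb: "(i,j') \<in> blocks b' n s" "b' \<in> {0,1}" using q qij by auto
    have "b = b'" using blocks_fst[OF pb assms(2)] blocks_fst[OF qb assms(2)] by simp
    then have "j = j'" using blocks_inj[OF pb(1) _ pb(2) assms(2)] qb by simp
    then show "p = q" using pij qij by simp
  qed
  have img: "fst ` ?U = ?D"
  proof
    show "fst ` ?U \<subseteq> ?D"
    proof
      fix i assume "i \<in> fst ` ?U"
      then obtain j b where jb: "(i,j) \<in> blocks b n s" "b \<in> {0,1}" by auto
      have "0 \<le> i \<and> i < n \<and> cell n s i = b \<and> cell n s (i - 1) \<noteq> cell n s i"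
        by (rule blocks_fst[OF jb assms(2)])
      then show "i \<in> ?D" by simp
    qed
  next
    show "?D \<subseteq> fst ` ?U"
    proof
      fix i assume i: "i \<in> ?D"
      then obtain j where j: "(i, j) \<in> blocks (cell n s i) n s"
        using blocks_ex[OF _ _ _ assms] by auto
      have "cell n s i \<in> {0,1}" using cell_01[OF assms] by auto
      then have "(i,j) \<in> ?U" using j by auto
      then show "i \<in> fst ` ?U" by force
    qed
  qed
  show ?thesis unfolding num_blocks_def using card_image[OF inj] img by simp
qed



lemma card_shift: fixes r x :: int shows "card {k \<in> {-r..r}. P (x + k)} = card {y \<in> {x-r..x+r}. P y}"
proof -
  have "(\<lambda>k. x + k) ` {k \<in> {-r..r}. P (x + k)} = {y \<in> {x-r..x+r}. P y}"
  proof
    show "{y \<in> {x-r..x+r}. P y} \<subseteq> (\<lambda>k. x + k) ` {k \<in> {-r..r}. P (x + k)}"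
    proof
      fix y assume "y \<in> {y \<in> {x-r..x+r}. P y}"
      then have h: "x - r \<le> y" "y \<le> x + r" "P y" by auto
      have "-r \<le> y - x" "y - x \<le> r" using h by auto
      moreover have "P (x + (y - x))" using h by simp
      ultimately have "y - x \<in> {k \<in> {-r..r}. P (x + k)}" by simp
      then show "y \<in> (\<lambda>k. x + k) ` {k \<in> {-r..r}. P (x + k)}" by (rule rev_image_eqI) simp
    qed
  qed auto
  moreover have "inj_on (\<lambda>k. x + k) A" for A by (rule inj_onI) simp
  ultimately show ?thesis by (metis card_image)
qed

lemma fin_filt[simp]: "finite {y \<in> {a..b::int}. P y}"
  by (rule finite_subset[of _ "{a..b}"]) auto

definition Zc :: "int \<Rightarrow> int \<Rightarrow> (int \<Rightarrow> nat) \<Rightarrow> int \<Rightarrow> nat" where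
  "Zc r n s x = card {y \<in> {x-r..x+r}. cell n s y = 0}"

lemma maj_Zc:
  assumes "is_config n s" "n \<ge> 1" "r \<ge> 0"
  shows "maj r n s x = (if r + 1 \<le> int (Zc r n s x) then 0 else 1)"
proof -
  let ?W = "{x-r..x+r}"
  let ?Z = "{y \<in> ?W. cell n s y = 0}"
  let ?O = "{y \<in> ?W. cell n s y = 1}"
  have un: "?Z \<union> ?O = ?W" using cell_01[OF assms(1,2)] by auto
  have dj: "?Z \<inter> ?O = {}" by auto
  have fZ: "finite ?Z" by (rule finite_subset[of _ ?W]) auto
  have fO: "finite ?O" by (rule finite_subset[of _ ?W]) auto
  have "card ?Z + card ?O = card ?W"
    using card_Un_disjoint[OF fZ fO dj] un by simp
  also have "card ?W = nat (2 * r + 1)" by simp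
  finally have sum: "int (card ?Z) + int (card ?O) = 2 * r + 1" using assms(3) by linarith
  have "maj r n s x = (if card ?Z > card ?O then 0 else 1)"
    unfolding maj_def card_shift[of r "\<lambda>y. cell n s y = 0" x] card_shift[of r "\<lambda>y. cell n s y = 1" x] ..
  then show ?thesis unfolding Zc_def using sum by auto
qed

lemma Zc_step:
  assumes "r \<ge> 0"
  shows "cell n s (x + r) = 0 \<Longrightarrow> Zc r n s (x - 1) \<le> Zc r n s x"
    and "cell n s (x + r) \<noteq> 0 \<Longrightarrow> Zc r n s x \<le> Zc r n s (x - 1)"
proof -
  let ?A = "{y \<in> {x-r..x+r-1}. cell n s y = 0}"
  have f: "finite ?A" by (rule finite_subset[of _ "{x-r..x+r-1}"]) auto
  {
    assume c: "cell n s (x + r) = 0"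
    have e: "{y \<in> {x-r..x+r}. cell n s y = 0} = insert (x + r) ?A" using c assms by auto
    have "card {y \<in> {x-r..x+r}. cell n s y = 0} = card ?A + 1"
      unfolding e using f by simp
    moreover have "{y \<in> {x-1-r..x-1+r}. cell n s y = 0} \<subseteq> insert (x-1-r) ?A" by auto
    then have "card {y \<in> {x-1-r..x-1+r}. cell n s y = 0} \<le> card (insert (x-1-r) ?A)"
      using f by (intro card_mono) auto
    moreover have "card (insert (x-1-r) ?A) \<le> card ?A + 1" using f by (simp add: card_insert_if)
    ultimately show "Zc r n s (x - 1) \<le> Zc r n s x" unfolding Zc_def by (simp add: algebra_simps)
  }
  {
    assume c: "cell n s (x + r) \<noteq> 0"
    have "{y \<in> {x-r..x+r}. cell n s y = 0} \<subseteq> {y \<in> {x-1-r..x-1+r}. cell n s y = 0}"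
    proof
      fix y assume y: "y \<in> {y \<in> {x-r..x+r}. cell n s y = 0}"
      then have "y \<noteq> x + r" using c by auto
      then show "y \<in> {y \<in> {x-1-r..x-1+r}. cell n s y = 0}" using y assms by auto
    qed
    then have "card {y \<in> {x-r..x+r}. cell n s y = 0} \<le> card {y \<in> {x-1-r..x-1+r}. cell n s y = 0}"
      by (intro card_mono) (rule fin_filt)
    then show "Zc r n s x \<le> Zc r n s (x - 1)" unfolding Zc_def by (simp add: algebra_simps)
  }
qed

lemma maj_key:
  assumes "is_config n s" "n \<ge> 1" "r \<ge> 0" "maj r n s (x - 1) \<noteq> maj r n s x"
  shows "maj r n s x = cell n s (x + r)"
proof -
  note m = maj_Zc[OF assms(1,2,3)]
  have c: "cell n s (x + r) \<in> {0,1}" by (rule cell_01[OF assms(1,2)])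
  show ?thesis
  proof (cases "r + 1 \<le> int (Zc r n s x)")
    case True
    then have "\<not> r + 1 \<le> int (Zc r n s (x - 1))" using assms(4) m[of x] m[of "x-1"] by (auto split: if_splits)
    then have "cell n s (x + r) = 0" using Zc_step(2)[OF assms(3), of n s x] True by linarith
    then show ?thesis using m[of x] True by simp
  next
    case False
    then have "r + 1 \<le> int (Zc r n s (x - 1))" using assms(4) m[of x] m[of "x-1"] by (auto split: if_splits)
    then have "cell n s (x + r) \<noteq> 0" using Zc_step(1)[OF assms(3), of n s x] False by linarith
    then show ?thesis using m[of x] False c by auto
  qed
qed

lemma maj_mod: "maj r n s (x mod n) = maj r n s x"
proof -
  have "cell n s (x mod n + k) = cell n s (x + k)" for k
    by (rule cell_cong) (simp add: mod_simps)
  then show ?thesis unfolding maj_def by simp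
qed



lemma fin_filt2[simp]: "finite {y \<in> {a<..b::int}. P y}"
  by (rule finite_subset[of _ "{a<..b}"]) auto

lemma card_step:
  fixes a b :: int
  assumes "a \<le> b"
  shows "card {x \<in> {a<..b+1}. P x} = card {x \<in> {a<..b}. P x} + (if P (b+1) then 1 else 0)"
proof -
  have iv: "{a<..b+1} = insert (b+1) {a<..b}" using assms by auto
  have e: "{x \<in> {a<..b+1}. P x} = (if P (b+1) then insert (b+1) {x \<in> {a<..b}. P x} else {x \<in> {a<..b}. P x})"
    unfolding iv by auto
  show ?thesis
  proof (cases "P (b+1)")
    case True
    have "b + 1 \<notin> {x \<in> {a<..b}. P x}" by simp
    then show ?thesis unfolding e using True card_insert_disjoint[OF fin_filt2[of a b P], of "b+1"] by simp
  next
    case False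
    then show ?thesis unfolding e by simp
  qed
qed

lemma inv:
  fixes g h :: "int \<Rightarrow> nat" and a :: int
  assumes g01: "\<forall>x. g x \<in> {0,1}" and h01: "\<forall>x. h x \<in> {0,1}"
    and key: "\<forall>x. g (x - 1) \<noteq> g x \<longrightarrow> h x = g x"
  shows "card {x \<in> {a<..a + int m}. g (x - 1) \<noteq> g x} + (if g (a + int m) \<noteq> h (a + int m) then 1 else 0)
    \<le> card {x \<in> {a<..a + int m}. h (x - 1) \<noteq> h x} + (if g a \<noteq> h a then 1 else 0)"
proof (induction m)
  case 0
  then show ?case by simp
next
  case (Suc m)
  define b where "b = a + int m"
  have bs: "a + int (Suc m) = b + 1" unfolding b_def by simp
  have ab: "a \<le> b" unfolding b_def by simp
  note cg = card_step[OF ab, of "\<lambda>x. g (x - 1) \<noteq> g x"]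
  note ch = card_step[OF ab, of "\<lambda>x. h (x - 1) \<noteq> h x"]
  have k: "g b \<noteq> g (b+1) \<Longrightarrow> h (b+1) = g (b+1)" using key[rule_format, of "b+1"] by simp
  have v1: "g b = 0 \<or> g b = 1" using g01 by auto
  have v2: "g (b+1) = 0 \<or> g (b+1) = 1" using g01 by auto
  have v3: "h b = 0 \<or> h b = 1" using h01 by auto
  have v4: "h (b+1) = 0 \<or> h (b+1) = 1" using h01 by auto
  have IH: "card {x \<in> {a<..b}. g (x - 1) \<noteq> g x} + (if g b \<noteq> h b then 1 else 0)
    \<le> card {x \<in> {a<..b}. h (x - 1) \<noteq> h x} + (if g a \<noteq> h a then 1 else 0)"
    using Suc.IH unfolding b_def .
  have cg': "card {x \<in> {a<..b+1}. g (x - 1) \<noteq> g x} = card {x \<in> {a<..b}. g (x - 1) \<noteq> g x} + (if g b \<noteq> g (b+1) then 1 else 0)"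
    using cg by simp
  have ch': "card {x \<in> {a<..b+1}. h (x - 1) \<noteq> h x} = card {x \<in> {a<..b}. h (x - 1) \<noteq> h x} + (if h b \<noteq> h (b+1) then 1 else 0)"
    using ch by simp
  show ?case unfolding bs cg' ch' using v1 v2 v3 v4 IH k
    by (elim disjE) simp_all
qed

lemma count_shift:
  fixes n c :: int
  assumes "n \<ge> 1" "\<forall>y. Q (y mod n) = Q y"
  shows "card {x \<in> {0..<n}. Q (x + c)} = card {x \<in> {0..<n}. Q x}"
proof -
  define f where "f x = (x + c) mod n" for x
  have inj: "inj_on f {0..<n}"
  proof (rule inj_onI)
    fix x y assume x: "x \<in> {0..<n}" and y: "y \<in> {0..<n}" and e: "f x = f y"
    have "x = (f x - c) mod n"
    proof -
      have "(f x - c) mod n = (x + c - c) mod n" unfolding f_def by (rule mod_diff_left_eq)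
      then show ?thesis using x by simp
    qed
    moreover have "y = (f y - c) mod n"
    proof -
      have "(f y - c) mod n = (y + c - c) mod n" unfolding f_def by (rule mod_diff_left_eq)
      then show ?thesis using y by simp
    qed
    ultimately show "x = y" using e by simp
  qed
  have img: "f ` {x \<in> {0..<n}. Q (x + c)} = {x \<in> {0..<n}. Q x}"
  proof
    show "f ` {x \<in> {0..<n}. Q (x + c)} \<subseteq> {x \<in> {0..<n}. Q x}"
    proof
      fix z assume "z \<in> f ` {x \<in> {0..<n}. Q (x + c)}"
      then obtain x where x: "Q (x + c)" and z: "z = (x + c) mod n" unfolding f_def by auto
      have "0 \<le> z" "z < n" using z assms(1) by simp_all
      moreover have "Q z" using z x assms(2) by simp
      ultimately show "z \<in> {x \<in> {0..<n}. Q x}" by simp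
    qed
  next
    show "{x \<in> {0..<n}. Q x} \<subseteq> f ` {x \<in> {0..<n}. Q (x + c)}"
    proof
      fix y assume y: "y \<in> {x \<in> {0..<n}. Q x}"
      define x where "x = (y - c) mod n"
      have fx: "f x = y"
      proof -
        have "f x = ((y - c) mod n + c) mod n" unfolding f_def x_def ..
        also have "\<dots> = (y - c + c) mod n" by (rule mod_add_left_eq)
        finally show ?thesis using y by simp
      qed
      have "Q (x + c) = Q ((x + c) mod n)" using assms(2) by simp
      also have "\<dots> = Q y" using fx unfolding f_def by simp
      finally have "Q (x + c)" using y by simp
      moreover have "0 \<le> x" "x < n" using assms(1) unfolding x_def by simp_all
      then have "x \<in> {0..<n}" by simp
      ultimately show "y \<in> f ` {x \<in> {0..<n}. Q (x + c)}" using fx by blast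
    qed
  qed
  have "card {x \<in> {0..<n}. Q (x + c)} = card (f ` {x \<in> {0..<n}. Q (x + c)})"
    by (rule card_image[symmetric]) (rule inj_on_subset[OF inj], auto)
  then show ?thesis using img by simp
qed

theorem claim11:
  fixes r n :: int and \<sigma> \<sigma>' :: "int \<Rightarrow> nat"
  assumes "r \<ge> 1" and "n \<ge> 1"
    and "is_config n \<sigma>" and "is_config n \<sigma>'"
    and "\<forall>i. 0 \<le> i \<and> i < n \<longrightarrow> \<sigma>' i = maj r n \<sigma> i"
  shows "num_blocks n \<sigma>' \<le> num_blocks n \<sigma>"
proof -
  define g where "g x = maj r n \<sigma> x" for x
  define h where "h x = cell n \<sigma> (x + r)" for x
  have g01: "\<forall>x. g x \<in> {0,1}" unfolding g_def maj_def by auto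
  have h01: "\<forall>x. h x \<in> {0,1}" unfolding h_def using cell_01[OF assms(3,2)] by auto
  have key: "\<forall>x. g (x - 1) \<noteq> g x \<longrightarrow> h x = g x"
    unfolding g_def h_def using maj_key[OF assms(3,2)] assms(1) by auto
  have I: "card {x \<in> {-1<..-1 + int (nat n)}. g (x - 1) \<noteq> g x} + (if g (-1 + int (nat n)) \<noteq> h (-1 + int (nat n)) then 1 else 0)
    \<le> card {x \<in> {-1<..-1 + int (nat n)}. h (x - 1) \<noteq> h x} + (if g (-1) \<noteq> h (-1) then 1 else 0)"
    by (rule inv[OF g01 h01 key])
  have nn: "-1 + int (nat n) = -1 + n" using assms(2) by simp
  have iv: "{-1<..-1 + n} = {0..<n}" by auto
  have gp: "g (-1 + n) = g (-1)"
    unfolding g_def by (metis maj_mod mod_add_self2)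
  have hp: "h (-1 + n) = h (-1)"
    unfolding h_def using cell_per[of n \<sigma> "-1 + r"] by (simp add: algebra_simps)
  have I2: "card {x \<in> {0..<n}. g (x - 1) \<noteq> g x} \<le> card {x \<in> {0..<n}. h (x - 1) \<noteq> h x}"
    using I unfolding nn iv gp hp by simp
  have cs': "cell n \<sigma>' x = g x" for x
  proof -
    have "cell n \<sigma>' x = \<sigma>' (x mod n)" by (simp add: cell_def)
    also have "\<dots> = maj r n \<sigma> (x mod n)" using assms(5) assms(2) by simp
    also have "\<dots> = g x" unfolding g_def by (rule maj_mod)
    finally show ?thesis .
  qed
  have L: "num_blocks n \<sigma>' = card {x \<in> {0..<n}. g (x - 1) \<noteq> g x}"
    unfolding num_blocks_eq[OF assms(4,2)] cs' ..
  have R: "card {x \<in> {0..<n}. h (x - 1) \<noteq> h x} = num_blocks n \<sigma>"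
  proof -
    have "card {x \<in> {0..<n}. h (x - 1) \<noteq> h x} = card {x \<in> {0..<n}. (\<lambda>y. cell n \<sigma> (y - 1) \<noteq> cell n \<sigma> y) (x + r)}"
      unfolding h_def by (simp add: algebra_simps)
    also have "\<dots> = card {x \<in> {0..<n}. cell n \<sigma> (x - 1) \<noteq> cell n \<sigma> x}"
    proof (rule count_shift[OF assms(2)])
      show "\<forall>y. (cell n \<sigma> (y mod n - 1) \<noteq> cell n \<sigma> (y mod n)) = (cell n \<sigma> (y - 1) \<noteq> cell n \<sigma> y)"
      proof
        fix y
        have "cell n \<sigma> (y mod n - 1) = cell n \<sigma> (y - 1)" by (rule cell_cong) (simp add: mod_simps)
        then show "(cell n \<sigma> (y mod n - 1) \<noteq> cell n \<sigma> (y mod n)) = (cell n \<sigma> (y - 1) \<noteq> cell n \<sigma> y)"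
          by (simp add: cell_mod)
      qed
    qed
    finally show ?thesis using num_blocks_eq[OF assms(3,2)] by simp
  qed
  show ?thesis using I2 L R by simp
qed

end
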